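(* Consider the system \[ \begin{aligned} \tfrac{d}{dt}\mathrm{LTR}_R &= k_{OFF}\,\mathrm{LTR}_I - k_{ON}\,\mathrm{LTR}_R,\\ \tfrac{d}{dt}\mathrm{LTR}_I &= -\Big[\tfrac{w_3w_4}{w_5}k_A(\mathrm{Tat}) + k_{OFF}\Big]\mathrm{LTR}_I + w_1k_I\,\mathrm{LTR}_A + k_{ON}\,\mathrm{LTR}_R,\\ \tfrac{d}{dt}\mathrm{LTR}_A &= \tfrac{w_3w_4}{w_5}k_A(\mathrm{Tat})\,\mathrm{LTR}_I - w_1k_I\,\mathrm{LTR}_A,\\ \tfrac{d}{dt}\mathrm{Tat} &= \alpha_{p_1}\mathrm{env}_I - \gamma_{p_1}\mathrm{Tat},\\ \tfrac{d}{dt}\mathrm{TAR} &= \alpha_{m_1,R}\mathrm{LTR}_R + \alpha_{m_1,I}\mathrm{LTR}_I + \alpha_{m_1,A}\mathrm{LTR}_A - \gamma_{m_1}\mathrm{TAR},\\ \tfrac{d}{dt}\mathrm{env}_I &= \alpha_{m_2,I}\mathrm{LTR}_I - (\gamma_{m_2}+\alpha_{p_1}+\alpha_{p_2})\mathrm{env}_I,\\ \tfrac{d}{dt}\mathrm{env}_A &= f_{m_2}(\mathrm{Tat})\,\mathrm{LTR}_A - (\gamma_{m_2}+\alpha_{p_2})\mathrm{env}_A,\\ \tfrac{d}{dt}\mathrm{Pr55} &= \alpha_{p_2}\mathrm{env}_I + \alpha_{p_2}\mathrm{env}_A - (\alpha_{p_3}/w_2)\mathrm{Pr55},\\ \tfrac{d}{dt}\mathrm{p24}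 &= (\alpha_{p_3}/w_2)\mathrm{Pr55} - \gamma_{p_2}\mathrm{p24}, \end{aligned} \] with \[ f_{m_2}(\mathrm{Tat}) = \frac{\alpha_{m_2,A}}{v_a}\,\frac{1+v_a(\mathrm{Tat}/T_c)^n}{1+(\mathrm{Tat}/T_c)^n},\qquad k_A(\mathrm{Tat}) = \frac{\beta_{m_2,A}}{v_b}\,\frac{1+v_b(\mathrm{Tat}/T_c)^m}{1+(\mathrm{Tat}/T_c)^m}, \] where $v_a>1$, $v_b>1$. Then this system is positively invariant, i.e. solutions starting with all components nonnegative remain nonnegative for all $t\ge 0$.
   Context: All parameters ($k_{ON},k_{OFF},k_I,w_1,\dots,w_5,\alpha$'s, $\beta_{m_2,A}$, $\gamma$'s, $T_c=\mathrm{Tat}_{crit}$) are positive constants, and $n,m\ge 1$. The LTR variables represent proportions of a conserved total LTR: $\mathrm{LTR}_R+\mathrm{LTR}_I+\mathrm{LTR}_A=1$. *)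

theory Defs
  imports Complex_Main
begin

definition fm2 :: "real \<Rightarrow> real \<Rightarrow> real \<Rightarrow> real \<Rightarrow> real \<Rightarrow> real" where
  "fm2 alpha_m2A va Tc n Tat =
     (alpha_m2A / va) * ((1 + va * (Tat / Tc) powr n) / (1 + (Tat / Tc) powr n))"

definition kA :: "real \<Rightarrow> real \<Rightarrow> real \<Rightarrow> real \<Rightarrow> real \<Rightarrow> real" where
  "kA beta_m2A vb Tc m Tat =
     (beta_m2A / vb) * ((1 + vb * (Tat / Tc) powr m) / (1 + (Tat / Tc) powr m))"

end

theory Submission
  imports Defs "HOL-Analysis.Analysis"
begin

lemma coop:
  fixes x d :: "'i \<Rightarrow> real \<Rightarrow> real" and I :: "'i set" and L :: real
  assumes fin: "finite I"
  and init: "\<And>i. i \<in> I \<Longrightarrow> x i 0 \<ge> 0"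
  and der: "\<And>i t. i \<in> I \<Longrightarrow> t \<ge> 0 \<Longrightarrow> (x i has_real_derivative d i t) (at t within {0..})"
  and key: "\<And>i t e. i \<in> I \<Longrightarrow> t \<ge> 0 \<Longrightarrow> e > 0 \<Longrightarrow> (\<forall>j\<in>I. x j t + e \<ge> 0)
              \<Longrightarrow> x i t + e = 0 \<Longrightarrow> d i t + L * e > 0"
  and i: "i \<in> I" and t0: "t0 \<ge> 0"
  shows "x i t0 \<ge> 0"
proof (rule ccontr)
  assume neg: "\<not> x i t0 \<ge> 0"
  define eps where "eps = - x i t0 / (2 * exp (L * t0))"
  have eps: "eps > 0" using neg unfolding eps_def by (intro divide_pos_pos) auto
  define z where "z j s = x j s + eps * exp (L * s)" for j s
  have zder: "(z j has_real_derivative (d j s + eps * exp (L * s) * L)) (at s within {0..})"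
    if "j \<in> I" "s \<ge> 0" for j s
    unfolding z_def
    by (rule derivative_eq_intros der that refl | simp)+
  have zcont: "continuous_on {0..t0} (z j)" if "j \<in> I" for j
  proof -
    have "\<forall>s\<in>{0..t0}. isCont (z j) s \<or> True" by simp
    show ?thesis
      apply (rule continuous_on_subset[of "{0..}"])
       apply (rule DERIV_continuous_on[of "{0..}" "z j" "\<lambda>s. d j s + eps * exp (L * s) * L"])
       apply (rule zder[OF that]) apply auto
      done
  qed
  have zt0: "z i t0 < 0" using neg
    by (simp add: z_def eps_def)
  define S where "S = (\<Union>j\<in>I. {0..t0} \<inter> z j -` {..0})"
  have Sclosed: "closed S" unfolding S_def
    using fin by (intro closed_UN ballI continuous_closed_preimage zcont) auto
  have t0S: "t0 \<in> S" unfolding S_def using i t0 zt0 less_imp_le by fastforce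
  have Sbdd: "bdd_below S" unfolding S_def by (rule bdd_belowI[of _ 0]) auto
  define tau where "tau = Inf S"
  have tauS: "tau \<in> S" unfolding tau_def using closed_contains_Inf[OF _ Sbdd Sclosed] t0S by auto
  have tau_le: "tau \<le> s" if "s \<in> S" for s unfolding tau_def using Sbdd that by (simp add: cInf_lower)
  have tau0: "tau \<ge> 0" using tauS unfolding S_def by auto
  have below: "z j s > 0" if "j \<in> I" "0 \<le> s" "s < tau" for j s
  proof (rule ccontr)
    assume "\<not> z j s > 0"
    moreover have "tau \<le> t0" using tauS unfolding S_def by auto
    ultimately have "s \<in> S" unfolding S_def using that by (intro UN_I[of j]) auto
    then show False using tau_le that by force
  qed
  have z0pos: "z j 0 > 0" if "j \<in> I" for j using init[OF that] eps by (simp add: z_def)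
  have taupos: "tau > 0"
  proof (rule ccontr)
    assume "\<not> tau > 0" then have "tau = 0" using tau0 by simp
    then show False using tauS z0pos unfolding S_def by force
  qed
  have zat: "(z j has_real_derivative (d j tau + eps * exp (L * tau) * L)) (at tau)" if "j \<in> I" for j
  proof -
    have "at tau within {0..} = at tau"
      by (rule at_within_interior) (use taupos in auto)
    then show ?thesis using zder[OF that tau0] by simp
  qed
  have zge: "z j tau \<ge> 0" if j: "j \<in> I" for j
  proof (rule ccontr)
    assume "\<not> z j tau \<ge> 0"
    then have lt: "z j tau < 0" by simp
    have "isCont (z j) tau" using zat[OF j] by (rule DERIV_isCont)
    then have "(z j \<longlongrightarrow> z j tau) (at tau)" by (simp add: isCont_def)
    then have "eventually (\<lambda>s. z j s < 0) (at tau)" using lt by (rule order_tendstoD(2))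
    then obtain r where r: "r > 0" "\<And>s. s \<noteq> tau \<Longrightarrow> dist s tau < r \<Longrightarrow> z j s < 0"
      unfolding eventually_at by auto
    define s where "s = max 0 (tau - r/2)"
    have "s < tau" "0 \<le> s" using r taupos by (auto simp: s_def)
    moreover have "dist s tau < r" using r taupos by (auto simp: s_def dist_real_def)
    ultimately show False using r(2)[of s] below[OF j] by force
  qed
  obtain j where j: "j \<in> I" and zj: "z j tau \<le> 0" using tauS unfolding S_def by auto
  have zj0: "z j tau = 0" using zge[OF j] zj by simp
  have "d j tau + L * (eps * exp (L * tau)) > 0"
    apply (rule key[OF j tau0])
    using eps zge zj0 by (auto simp: z_def)
  then have "d j tau + eps * exp (L * tau) * L > 0" by (simp add: algebra_simps)
  from DERIV_pos_inc_left[OF zat[OF j] this] obtain r where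
    r: "r > 0" "\<And>h. h > 0 \<Longrightarrow> h < r \<Longrightarrow> z j (tau - h) < z j tau" by auto
  define h where "h = min (r/2) (tau/2)"
  have "h > 0" "h < r" "tau - h \<ge> 0" "tau - h < tau" using r taupos by (auto simp: h_def)
  then show False using r(2)[of h] below[OF j, of "tau - h"] zj0 by auto
qed


lemma scalar_nonneg:
  fixes x d :: "real \<Rightarrow> real" and L :: real
  assumes init: "x 0 \<ge> 0"
  and der: "\<And>t. t \<ge> 0 \<Longrightarrow> (x has_real_derivative d t) (at t within {0..})"
  and key: "\<And>t e. t \<ge> 0 \<Longrightarrow> e > 0 \<Longrightarrow> x t = - e \<Longrightarrow> d t + L * e > 0"
  and t0: "t0 \<ge> 0"
  shows "x t0 \<ge> 0"
  using coop[of "{()}" "\<lambda>_. x" "\<lambda>_. d" L "()" t0] assms by auto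

lemma kA_bounds:
  assumes "b > 0" "vb > 1"
  shows "0 \<le> kA b vb Tc m T" "kA b vb Tc m T \<le> b"
proof -
  define p where "p = (T / Tc) powr m"
  have p: "p \<ge> 0" by (simp add: p_def)
  have "(1 + vb * p) / (1 + p) \<le> vb" using p assms by (simp add: field_simps)
  then have "b / vb * ((1 + vb * p) / (1 + p)) \<le> b / vb * vb"
    using assms by (intro mult_left_mono) auto
  then show "kA b vb Tc m T \<le> b" using assms by (simp add: kA_def p_def)
  show "0 \<le> kA b vb Tc m T" using assms p by (simp add: kA_def p_def[symmetric])
qed

lemma fm2_nonneg:
  assumes "a > 0" "va > 1"
  shows "0 \<le> fm2 a va Tc n T"
  using assms by (simp add: fm2_def)

theorem mainTheorem3:
  fixes kON kOFF kI w1 w2 w3 w4 w5 :: real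
    and ap1 ap2 ap3 am1R am1I am1A am2I am2A bm2A :: real
    and gp1 gp2 gm1 gm2 :: real
    and Tc va vb n m :: real
    and LR LI LA Tat TAR envI envA Pr55 p24 :: "real \<Rightarrow> real"
  assumes pos: "kON > 0" "kOFF > 0" "kI > 0" "w1 > 0" "w2 > 0" "w3 > 0" "w4 > 0" "w5 > 0"
    and pos_alpha: "ap1 > 0" "ap2 > 0" "ap3 > 0" "am1R > 0" "am1I > 0" "am1A > 0"
        "am2I > 0" "am2A > 0" "bm2A > 0"
    and pos_gamma: "gp1 > 0" "gp2 > 0" "gm1 > 0" "gm2 > 0"
    and Tc_pos: "Tc > 0"
    and v_gt: "va > 1" "vb > 1"
    and nm: "n \<ge> 1" "m \<ge> 1"
    and dLR: "\<And>t. t \<ge> 0 \<Longrightarrow>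
       (LR has_real_derivative (kOFF * LI t - kON * LR t)) (at t within {0..})"
    and dLI: "\<And>t. t \<ge> 0 \<Longrightarrow>
       (LI has_real_derivative
          (- (w3 * w4 / w5 * kA bm2A vb Tc m (Tat t) + kOFF) * LI t
           + w1 * kI * LA t + kON * LR t)) (at t within {0..})"
    and dLA: "\<And>t. t \<ge> 0 \<Longrightarrow>
       (LA has_real_derivative
          (w3 * w4 / w5 * kA bm2A vb Tc m (Tat t) * LI t - w1 * kI * LA t)) (at t within {0..})"
    and dTat: "\<And>t. t \<ge> 0 \<Longrightarrow>
       (Tat has_real_derivative (ap1 * envI t - gp1 * Tat t)) (at t within {0..})"
    and dTAR: "\<And>t. t \<ge> 0 \<Longrightarrow>
       (TAR has_real_derivative
          (am1R * LR t + am1I * LI t + am1A * LA t - gm1 * TAR t)) (at t within {0..})"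
    and denvI: "\<And>t. t \<ge> 0 \<Longrightarrow>
       (envI has_real_derivative (am2I * LI t - (gm2 + ap1 + ap2) * envI t)) (at t within {0..})"
    and denvA: "\<And>t. t \<ge> 0 \<Longrightarrow>
       (envA has_real_derivative
          (fm2 am2A va Tc n (Tat t) * LA t - (gm2 + ap2) * envA t)) (at t within {0..})"
    and dPr55: "\<And>t. t \<ge> 0 \<Longrightarrow>
       (Pr55 has_real_derivative
          (ap2 * envI t + ap2 * envA t - (ap3 / w2) * Pr55 t)) (at t within {0..})"
    and dp24: "\<And>t. t \<ge> 0 \<Longrightarrow>
       (p24 has_real_derivative ((ap3 / w2) * Pr55 t - gp2 * p24 t)) (at t within {0..})"
    and cons0: "LR 0 + LI 0 + LA 0 = 1"
    and init: "LR 0 \<ge> 0" "LI 0 \<ge> 0" "LA 0 \<ge> 0" "Tat 0 \<ge> 0" "TAR 0 \<ge> 0"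
        "envI 0 \<ge> 0" "envA 0 \<ge> 0" "Pr55 0 \<ge> 0" "p24 0 \<ge> 0"
  shows "\<forall>t\<ge>0. LR t \<ge> 0 \<and> LI t \<ge> 0 \<and> LA t \<ge> 0 \<and> Tat t \<ge> 0 \<and> TAR t \<ge> 0
                 \<and> envI t \<ge> 0 \<and> envA t \<ge> 0 \<and> Pr55 t \<ge> 0 \<and> p24 t \<ge> 0"
proof -
  define c where "c = w3 * w4 / w5"
  have c: "c > 0" using pos by (simp add: c_def)
  define K where "K t = c * kA bm2A vb Tc m (Tat t)" for t
  have K0: "K t \<ge> 0" for t using kA_bounds(1)[of bm2A vb Tc m "Tat t"] pos_alpha v_gt c
    by (simp add: K_def)
  have K1: "K t \<le> c * bm2A" for t using kA_bounds(2)[of bm2A vb Tc m "Tat t"] pos_alpha v_gt c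
    by (simp add: K_def)
  define X where "X i = (if i = (0::nat) then LR else if i = 1 then LI else LA)" for i
  define D where "D i t = (if i = (0::nat) then kOFF * LI t - kON * LR t
       else if i = 1 then - (K t + kOFF) * LI t + w1 * kI * LA t + kON * LR t
       else K t * LI t - w1 * kI * LA t)" for i t
  define L where "L = kON + kOFF + c * bm2A + w1 * kI + 1"
  have LTR: "X i t \<ge> 0" if "i \<in> {0,1,2}" "t \<ge> 0" for i t
  proof (rule coop[of "{0,1,2}" X D L])
    show "(X i has_real_derivative D i t) (at t within {0..})" if "i \<in> {0,1,2}" "t \<ge> 0" for i t
      using that dLR dLI dLA by (auto simp: X_def D_def K_def c_def)
    show "X i 0 \<ge> 0" if "i \<in> {0,1,2}" for i using that init by (auto simp: X_def)
    fix i t e assume i: "i \<in> {0::nat,1,2}" and t: "t \<ge> 0" and e: "e > 0"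
      and all: "\<forall>j\<in>{0,1,2}. X j t + e \<ge> 0" and eq: "X i t + e = 0"
    have R: "LR t \<ge> - e" and I: "LI t \<ge> - e" and A: "LA t \<ge> - e"
      using all by (auto simp: X_def)
    have p1: "kOFF * LI t \<ge> - (kOFF * e)" using mult_left_mono[OF I, of kOFF] pos by simp
    have p2: "w1 * kI * LA t \<ge> - (w1 * kI * e)" using mult_left_mono[OF A, of "w1 * kI"] pos by simp
    have p3: "kON * LR t \<ge> - (kON * e)" using mult_left_mono[OF R, of kON] pos by simp
    have p4: "K t * LI t \<ge> - (c * bm2A * e)"
    proof -
      have "K t * LI t \<ge> K t * (- e)" using I K0 by (rule mult_left_mono)
      moreover have "K t * e \<le> c * bm2A * e" using K1 e by (simp add: mult_right_mono)
      ultimately show ?thesis by simp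
    qed
    have Le: "L * e = kON * e + kOFF * e + c * bm2A * e + w1 * kI * e + e"
      by (simp add: L_def algebra_simps)
    have q: "kON * e > 0" "kOFF * e > 0" "c * bm2A * e > 0" "w1 * kI * e > 0" "K t * e \<ge> 0"
      using e pos c pos_alpha K0[of t] by simp_all
    consider "i = 0" | "i = 1" | "i = 2" using i by auto
    then show "D i t + L * e > 0"
    proof cases
      case 1
      then have "LR t = - e" using eq by (simp add: X_def)
      then have "D i t = kOFF * LI t + kON * e" using 1 by (simp add: D_def)
      then show ?thesis using p1 q Le e by linarith
    next
      case 2
      then have "LI t = - e" using eq by (simp add: X_def)
      then have "D i t = K t * e + kOFF * e + w1 * kI * LA t + kON * LR t" using 2
        by (simp add: D_def algebra_simps)
      then show ?thesis using p2 p3 q Le e by linarith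
    next
      case 3
      then have "LA t = - e" using eq by (simp add: X_def)
      then have "D i t = K t * LI t + w1 * kI * e" using 3 by (simp add: D_def)
      then show ?thesis using p4 q Le e by linarith
    qed
  qed (use that in auto)
  have R: "LR t \<ge> 0" and I: "LI t \<ge> 0" and A: "LA t \<ge> 0" if "t \<ge> 0" for t
    using LTR[of 0 t] LTR[of 1 t] LTR[of 2 t] that by (auto simp: X_def)
  have eI: "envI t \<ge> 0" if "t \<ge> 0" for t
  proof (rule scalar_nonneg[where x = envI and L = 1 and d = "\<lambda>t. am2I * LI t - (gm2 + ap1 + ap2) * envI t"])
    fix t e :: real assume h: "t \<ge> 0" "e > 0" "envI t = - e"
    have "am2I * LI t \<ge> 0" using I[OF h(1)] pos_alpha by simp
    moreover have "(gm2 + ap1 + ap2) * e > 0" using h pos_alpha pos_gamma by simp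
    ultimately show "am2I * LI t - (gm2 + ap1 + ap2) * envI t + 1 * e > 0" using h(3) h(2) by simp
  qed (simp_all add: init denvI that)
  have Ta: "Tat t \<ge> 0" if "t \<ge> 0" for t
  proof (rule scalar_nonneg[where x = Tat and L = 1 and d = "\<lambda>t. ap1 * envI t - gp1 * Tat t"])
    fix t e :: real assume h: "t \<ge> 0" "e > 0" "Tat t = - e"
    have "ap1 * envI t \<ge> 0" using eI[OF h(1)] pos_alpha by simp
    moreover have "gp1 * e > 0" using h pos_gamma by simp
    ultimately show "ap1 * envI t - gp1 * Tat t + 1 * e > 0" using h(3) h(2) by simp
  qed (simp_all add: init dTat that)
  have TA: "TAR t \<ge> 0" if "t \<ge> 0" for t
  proof (rule scalar_nonneg[where x = TAR and L = 1 and d = "\<lambda>t. am1R * LR t + am1I * LI t + am1A * LA t - gm1 * TAR t"])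
    fix t e :: real assume h: "t \<ge> 0" "e > 0" "TAR t = - e"
    have "am1R * LR t \<ge> 0" "am1I * LI t \<ge> 0" "am1A * LA t \<ge> 0"
      using R[OF h(1)] I[OF h(1)] A[OF h(1)] pos_alpha by simp_all
    moreover have "gm1 * e > 0" using h pos_gamma by simp
    ultimately show "am1R * LR t + am1I * LI t + am1A * LA t - gm1 * TAR t + 1 * e > 0" using h(3) h(2) by simp
  qed (simp_all add: init dTAR that)
  have eA: "envA t \<ge> 0" if "t \<ge> 0" for t
  proof (rule scalar_nonneg[where x = envA and L = 1 and d = "\<lambda>t. fm2 am2A va Tc n (Tat t) * LA t - (gm2 + ap2) * envA t"])
    fix t e :: real assume h: "t \<ge> 0" "e > 0" "envA t = - e"
    have "fm2 am2A va Tc n (Tat t) * LA t \<ge> 0"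
      using A[OF h(1)] fm2_nonneg[of am2A va Tc n "Tat t"] v_gt pos_alpha by simp
    moreover have "(gm2 + ap2) * e > 0" using h pos_alpha pos_gamma by simp
    ultimately show "fm2 am2A va Tc n (Tat t) * LA t - (gm2 + ap2) * envA t + 1 * e > 0" using h(3) h(2) by simp
  qed (simp_all add: init denvA that)
  have Pr: "Pr55 t \<ge> 0" if "t \<ge> 0" for t
  proof (rule scalar_nonneg[where x = Pr55 and L = 1 and d = "\<lambda>t. ap2 * envI t + ap2 * envA t - (ap3 / w2) * Pr55 t"])
    fix t e :: real assume h: "t \<ge> 0" "e > 0" "Pr55 t = - e"
    have "ap2 * envI t \<ge> 0" "ap2 * envA t \<ge> 0" using eI[OF h(1)] eA[OF h(1)] pos_alpha by simp_all
    moreover have "(ap3 / w2) * e > 0" using h pos pos_alpha by simp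
    ultimately show "ap2 * envI t + ap2 * envA t - (ap3 / w2) * Pr55 t + 1 * e > 0" using h(3) h(2) by simp
  next
    show "0 \<le> t" by (rule that)
    show "0 \<le> Pr55 0" by (rule init(8))
    show "(Pr55 has_real_derivative (ap2 * envI t + ap2 * envA t - (ap3 / w2) * Pr55 t)) (at t within {0..})" if "0 \<le> t" for t
      using dPr55[OF that] .
  qed
  have p: "p24 t \<ge> 0" if "t \<ge> 0" for t
  proof (rule scalar_nonneg[where x = p24 and L = 1 and d = "\<lambda>t. (ap3 / w2) * Pr55 t - gp2 * p24 t"])
    fix t e :: real assume h: "t \<ge> 0" "e > 0" "p24 t = - e"
    have "(ap3 / w2) * Pr55 t \<ge> 0" using Pr[OF h(1)] pos pos_alpha by simp
    moreover have "gp2 * e > 0" using h pos_gamma by simp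
    ultimately show "(ap3 / w2) * Pr55 t - gp2 * p24 t + 1 * e > 0" using h(3) h(2) by simp
  next
    show "0 \<le> t" by (rule that)
    show "0 \<le> p24 0" by (rule init(9))
    show "(p24 has_real_derivative ((ap3 / w2) * Pr55 t - gp2 * p24 t)) (at t within {0..})" if "0 \<le> t" for t
      using dp24[OF that] .
  qed
  show ?thesis by (simp add: R I A Ta TA eI eA Pr p)
qed

end
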